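(* Let $t_1$, $\ell_1$, $t_2$, and $\ell_2$ be positive integers. If $\ell_1 < 2t_1$, then there are only finitely many matroids (up to isomorphism) with the $(t_1,\ell_1,t_2,\ell_2)$-property. The same is true if $\ell_2 < 2t_2$.
   Context: A matroid has the $(t_1,\ell_1,t_2,\ell_2)$-property if every $t_1$-element subset of its ground set is contained in an $\ell_1$-element circuit, and every $t_2$-element subset of its ground set is contained in an $\ell_2$-element cocircuit. *)

theory Defs
  imports Main
begin

definition matroid :: "'a set \<Rightarrow> 'a set set \<Rightarrow> bool" where
  "matroid E I \<longleftrightarrow> finite E \<and> I \<subseteq> Pow E \<and> {} \<in> I
     \<and> (\<forall>X Y. Y \<in> I \<and> X \<subseteq> Y \<longrightarrow> X \<in> I)
     \<and> (\<forall>X Y. X \<in> I \<and> Y \<in> I \<and> card X < card Y \<longrightarrow> (\<exists>y\<in>Y - X. insert y X \<in> I))"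

definition circuit :: "'a set \<Rightarrow> 'a set set \<Rightarrow> 'a set \<Rightarrow> bool" where
  "circuit E I C \<longleftrightarrow> C \<subseteq> E \<and> C \<notin> I \<and> (\<forall>D. D \<subset> C \<longrightarrow> D \<in> I)"

definition basis :: "'a set set \<Rightarrow> 'a set \<Rightarrow> bool" where
  "basis I B \<longleftrightarrow> B \<in> I \<and> (\<forall>X\<in>I. B \<subseteq> X \<longrightarrow> X = B)"

definition dual_indep :: "'a set \<Rightarrow> 'a set set \<Rightarrow> 'a set set" where
  "dual_indep E I = {X. X \<subseteq> E \<and> (\<exists>B. basis I B \<and> X \<inter> B = {})}"

definition cocircuit :: "'a set \<Rightarrow> 'a set set \<Rightarrow> 'a set \<Rightarrow> bool" where
  "cocircuit E I C \<longleftrightarrow> circuit E (dual_indep E I) C"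

definition tl_property :: "nat \<Rightarrow> nat \<Rightarrow> nat \<Rightarrow> nat \<Rightarrow> 'a set \<Rightarrow> 'a set set \<Rightarrow> bool" where
  "tl_property t1 l1 t2 l2 E I \<longleftrightarrow>
     (\<forall>X. X \<subseteq> E \<and> card X = t1 \<longrightarrow> (\<exists>C. circuit E I C \<and> card C = l1 \<and> X \<subseteq> C)) \<and>
     (\<forall>X. X \<subseteq> E \<and> card X = t2 \<longrightarrow> (\<exists>C. cocircuit E I C \<and> card C = l2 \<and> X \<subseteq> C))"

definition matroid_iso :: "'a set \<Rightarrow> 'a set set \<Rightarrow> 'b set \<Rightarrow> 'b set set \<Rightarrow> bool" where
  "matroid_iso E I E' I' \<longleftrightarrow>
     (\<exists>f. bij_betw f E E' \<and> (\<forall>X. X \<subseteq> E \<longrightarrow> (X \<in> I \<longleftrightarrow> f ` X \<in> I')))"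

end

theory Submission
  imports Defs
begin



lemma ex_max_card:
  assumes "finite A" "X \<in> A"
  shows "\<exists>Y\<in>A. \<forall>Z\<in>A. card Z \<le> card Y"
proof -
  have fin: "finite (card ` A)" using assms(1) by (rule finite_imageI)
  have ne: "card ` A \<noteq> {}" using assms(2) by blast
  have "Max (card ` A) \<in> card ` A" by (rule Max_in[OF fin ne])
  then obtain Y where Y: "Y \<in> A" "Max (card ` A) = card Y" by (rule imageE)
  have "\<forall>Z\<in>A. card Z \<le> card Y"
  proof
    fix Z assume "Z \<in> A"
    then have "card Z \<in> card ` A" by (rule imageI)
    then have "card Z \<le> Max (card ` A)" by (rule Max_ge[OF fin])
    then show "card Z \<le> card Y" using Y(2) by simp
  qed
  then show ?thesis using Y(1) by blast
qed

locale matr =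
  fixes E :: "'a set" and I :: "'a set set"
  assumes matroid: "matroid E I"
begin

lemma finE: "finite E" using matroid unfolding matroid_def by auto
lemma indep_sub: "X \<in> I \<Longrightarrow> X \<subseteq> E" using matroid unfolding matroid_def by auto
lemma indep_fin: "X \<in> I \<Longrightarrow> finite X" by (meson finE finite_subset indep_sub)
lemma indep_empty: "{} \<in> I" using matroid unfolding matroid_def by auto
lemma indep_subset: "Y \<in> I \<Longrightarrow> X \<subseteq> Y \<Longrightarrow> X \<in> I" using matroid unfolding matroid_def by blast
lemma augment: "X \<in> I \<Longrightarrow> Y \<in> I \<Longrightarrow> card X < card Y \<Longrightarrow> \<exists>y\<in>Y-X. insert y X \<in> I"
  using matroid unfolding matroid_def by blast

definition rk :: "'a set \<Rightarrow> nat" where "rk X = Max (card ` {Y. Y \<subseteq> X \<and> Y \<in> I})"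

lemma rk_fin: "finite {Y. Y \<subseteq> X \<and> Y \<in> I}"
proof -
  have "{Y. Y \<subseteq> X \<and> Y \<in> I} \<subseteq> Pow E" using indep_sub by auto
  then show ?thesis using finE by (meson finite_Pow_iff finite_subset)
qed

lemma rk_ge: "Y \<subseteq> X \<Longrightarrow> Y \<in> I \<Longrightarrow> card Y \<le> rk X"
  unfolding rk_def using rk_fin by (intro Max_ge) blast+

lemma rk_obtain: "\<exists>Y. Y \<subseteq> X \<and> Y \<in> I \<and> card Y = rk X"
proof -
  have e: "{} \<in> {Y. Y \<subseteq> X \<and> Y \<in> I}" using indep_empty by simp
  have ne: "card ` {Y. Y \<subseteq> X \<and> Y \<in> I} \<noteq> {}" unfolding image_is_empty using e by blast
  have fin: "finite (card ` {Y. Y \<subseteq> X \<and> Y \<in> I})" using rk_fin by (rule finite_imageI)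
  have "Max (card ` {Y. Y \<subseteq> X \<and> Y \<in> I}) \<in> card ` {Y. Y \<subseteq> X \<and> Y \<in> I}"
    by (rule Max_in[OF fin ne])
  then obtain Y where Y: "Y \<in> {Y. Y \<subseteq> X \<and> Y \<in> I}" "Max (card ` {Y. Y \<subseteq> X \<and> Y \<in> I}) = card Y" 
    by (rule imageE)
  have "card Y = rk X" unfolding rk_def using Y(2) by simp
  then show ?thesis using Y(1) by blast
qed

lemma rk_le_card: "finite X \<Longrightarrow> rk X \<le> card X"
proof -
  assume f: "finite X"
  obtain Y where Y: "Y \<subseteq> X" "Y \<in> I" "card Y = rk X" using rk_obtain by blast
  show ?thesis using card_mono[OF f Y(1)] Y(3) by simp
qed

lemma rk_mono: "X \<subseteq> Y \<Longrightarrow> rk X \<le> rk Y"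
proof -
  assume s: "X \<subseteq> Y"
  obtain Z where Z: "Z \<subseteq> X" "Z \<in> I" "card Z = rk X" using rk_obtain by blast
  have ZY: "Z \<subseteq> Y" using Z s by blast
  show ?thesis using rk_ge[OF ZY Z(2)] Z(3) by simp
qed

lemma rk_indep: "X \<in> I \<Longrightarrow> rk X = card X"
  using rk_ge[of X X] rk_le_card[of X] indep_fin by auto

lemma rk_insert_le: "rk (insert x X) \<le> Suc (rk X)"
proof -
  obtain Y where Y: "Y \<subseteq> insert x X" "Y \<in> I" "card Y = rk (insert x X)" using rk_obtain by blast
  have "Y - {x} \<subseteq> X" "Y - {x} \<in> I" using Y indep_subset by auto
  then have "card (Y - {x}) \<le> rk X" using rk_ge by auto
  moreover have "card Y \<le> Suc (card (Y - {x}))" using indep_fin[OF Y(2)]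
    by (cases "x \<in> Y") (simp_all add: card_Diff_singleton_if)
  ultimately show ?thesis using Y by auto
qed

lemma rk_union_le: "finite B \<Longrightarrow> rk (A \<union> B) \<le> rk A + card B"
proof (induction B rule: finite_induct)
  case empty then show ?case by simp
next
  case (insert x F)
  have "rk (A \<union> insert x F) = rk (insert x (A \<union> F))" by simp
  also have "\<dots> \<le> Suc (rk (A \<union> F))" by (rule rk_insert_le)
  finally show ?case using insert by simp
qed

lemma extend:
  assumes "J \<in> I" "J \<subseteq> Y"
  shows "\<exists>J'. J \<subseteq> J' \<and> J' \<subseteq> Y \<and> J' \<in> I \<and> card J' = rk Y"
proof -
  let ?A = "{J'. J \<subseteq> J' \<and> J' \<subseteq> Y \<and> J' \<in> I}"
  have sub: "?A \<subseteq> {Y'. Y' \<subseteq> Y \<and> Y' \<in> I}" by blast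
  have finA: "finite ?A" by (rule finite_subset[OF sub rk_fin])
  have JA: "J \<in> ?A" using assms by blast
  obtain J' where J'A: "J' \<in> ?A" and mx: "\<forall>Z\<in>?A. card Z \<le> card J'"
    using ex_max_card[OF finA JA] by blast
  have J': "J \<subseteq> J'" "J' \<subseteq> Y" "J' \<in> I" using J'A by auto
  have le: "card J' \<le> rk Y" using rk_ge[OF J'(2,3)] .
  have "\<not> card J' < rk Y"
  proof
    assume lt: "card J' < rk Y"
    obtain K where K: "K \<subseteq> Y" "K \<in> I" "card K = rk Y" using rk_obtain by blast
    have "card J' < card K" using lt K(3) by simp
    then obtain y where y: "y \<in> K - J'" "insert y J' \<in> I" using augment[OF J'(3) K(2)] by blast
    have ins: "insert y J' \<in> ?A" using y J' K(1) by blast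
    have c: "card (insert y J') = Suc (card J')" using y(1) indep_fin[OF J'(3)] by simp
    have "card (insert y J') \<le> card J'" using mx ins by blast
    then show False using c by simp
  qed
  then have "card J' = rk Y" using le by simp
  then show ?thesis using J' by blast
qed

definition cl :: "'a set \<Rightarrow> 'a set" where "cl X = {x \<in> E. rk (insert x X) = rk X}"

lemma cl_mono:
  assumes "X \<subseteq> Y" "x \<in> cl X"
  shows "x \<in> cl Y"
proof -
  have cx: "x \<in> E \<and> rk (insert x X) = rk X" using assms(2) unfolding cl_def by simp
  obtain J where J: "J \<subseteq> X" "J \<in> I" "card J = rk X" using rk_obtain by blast
  have JY: "J \<subseteq> Y" using J(1) assms(1) by blast
  obtain J' where J': "J \<subseteq> J'" "J' \<subseteq> Y" "J' \<in> I" "card J' = rk Y" using extend[OF J(2) JY] by blast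
  have "\<not> rk Y < rk (insert x Y)"
  proof
    assume lt: "rk Y < rk (insert x Y)"
    obtain K where K: "K \<subseteq> insert x Y" "K \<in> I" "card K = rk (insert x Y)" using rk_obtain by blast
    have "card J' < card K" using lt J'(4) K(3) by simp
    then obtain y where y: "y \<in> K - J'" "insert y J' \<in> I" using augment[OF J'(3) K(2)] by blast
    have yJ': "y \<notin> J'" using y(1) by blast
    have cins: "card (insert y J') = Suc (card J')" using yJ' indep_fin[OF J'(3)] by simp
    show False
    proof (cases "y \<in> Y")
      case True
      have "insert y J' \<subseteq> Y" using True J'(2) by blast
      then have "card (insert y J') \<le> rk Y" using rk_ge[OF _ y(2)] by blast
      then show False using cins J'(4) by simp
    next
      case False
      then have yx: "y = x" using y(1) K(1) by blast
      have xJ': "x \<notin> J'" using yx yJ' by simp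
      have "insert x J \<subseteq> insert y J'" using yx J'(1) by blast
      then have ind: "insert x J \<in> I" using indep_subset[OF y(2)] by blast
      have sub: "insert x J \<subseteq> insert x X" using J(1) by blast
      have a: "card (insert x J) \<le> rk (insert x X)" using rk_ge[OF sub ind] .
      have "x \<notin> J" using xJ' J'(1) by blast
      then have "card (insert x J) = Suc (card J)" using indep_fin[OF J(2)] by simp
      then show False using a cx J(3) by simp
    qed
  qed
  moreover have "rk Y \<le> rk (insert x Y)" by (rule rk_mono) blast
  ultimately have "rk (insert x Y) = rk Y" by simp
  then show ?thesis unfolding cl_def using cx by simp
qed

lemma cl_insert_indep:
  assumes "J \<in> I" "x \<in> E" "x \<notin> cl J"
  shows "insert x J \<in> I"
proof -
  have ne: "rk (insert x J) \<noteq> rk J" using assms unfolding cl_def by auto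
  have xJ: "x \<notin> J" using ne by (metis insert_absorb)
  have "rk J = card J" using rk_indep assms by auto
  moreover have "rk J \<le> rk (insert x J)" by (rule rk_mono) auto
  ultimately have gt: "card J < rk (insert x J)" using ne by auto
  obtain K where K: "K \<subseteq> insert x J" "K \<in> I" "card K = rk (insert x J)" using rk_obtain by blast
  have fin: "finite (insert x J)" using indep_fin assms by auto
  have "card (insert x J) = Suc (card J)" using xJ indep_fin assms by auto
  then have "card K = card (insert x J)" using K gt rk_le_card[OF fin] by auto
  then have "K = insert x J" using card_subset_eq[OF fin K(1)] by auto
  then show ?thesis using K by auto
qed

lemma sub_cl: "x \<in> X \<Longrightarrow> x \<in> E \<Longrightarrow> x \<in> cl X"
  unfolding cl_def by (simp add: insert_absorb)

lemma rk_cl_union: "finite A \<Longrightarrow> A \<subseteq> cl K \<Longrightarrow> rk (K \<union> A) = rk K"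
proof (induction A rule: finite_induct)
  case empty then show ?case by simp
next
  case (insert a F)
  have "a \<in> cl (K \<union> F)" using insert cl_mono[of K "K \<union> F" a] by auto
  then have "rk (insert a (K \<union> F)) = rk (K \<union> F)" unfolding cl_def by simp
  moreover have "rk (K \<union> F) = rk K" using insert.IH insert.prems by simp
  moreover have "K \<union> insert a F = insert a (K \<union> F)" by simp
  ultimately show ?case by simp
qed

lemma exchange:
  assumes "x \<in> E" "y \<in> E" "y \<in> cl (insert x X)" "y \<notin> cl X"
  shows "x \<in> cl (insert y X)"
proof (rule ccontr)
  assume nx: "x \<notin> cl (insert y X)"
  have a: "rk (insert y (insert x X)) = rk (insert x X)" using assms(3) unfolding cl_def by simp
  have b: "rk (insert y X) \<noteq> rk X" using assms(2,4) unfolding cl_def by simp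
  have b2: "rk X \<le> rk (insert y X)" by (rule rk_mono) auto
  have c: "rk (insert x (insert y X)) \<noteq> rk (insert y X)" using nx assms(1) unfolding cl_def by simp
  have c2: "rk (insert y X) \<le> rk (insert x (insert y X))" by (rule rk_mono) auto
  have "rk (insert x X) \<le> Suc (rk X)" by (rule rk_insert_le)
  moreover have "rk (insert x (insert y X)) = rk (insert x X)" using a by (simp add: insert_commute)
  ultimately show False using b b2 c c2 by linarith
qed

end



context matr begin

lemma basis_card:
  assumes "basis I B" shows "card B = rk E"
proof -
  have B: "B \<in> I" and mx: "\<forall>X\<in>I. B \<subseteq> X \<longrightarrow> X = B" using assms unfolding basis_def by blast+
  have BE: "B \<subseteq> E" by (rule indep_sub[OF B])
  obtain J' where J': "B \<subseteq> J'" "J' \<subseteq> E" "J' \<in> I" "card J' = rk E" using extend[OF B BE] by blast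
  have "J' = B" using mx J'(1,3) by blast
  then show ?thesis using J'(4) by simp
qed

lemma indep_rk_basis:
  assumes X: "X \<in> I" and c: "card X = rk E" shows "basis I X"
  unfolding basis_def
proof (intro conjI ballI impI)
  show "X \<in> I" by (rule X)
  fix Y assume Y: "Y \<in> I" and XY: "X \<subseteq> Y"
  have "card Y \<le> rk E" using rk_ge[OF indep_sub[OF Y] Y] .
  have finY: "finite Y" by (rule indep_fin[OF Y])
  have "card X \<le> card Y" by (rule card_mono[OF finY XY])
  then have "card X = card Y" using \<open>card Y \<le> rk E\<close> c by simp
  then show "Y = X" using card_subset_eq[OF finY XY] by simp
qed

lemma extend_basis:
  assumes X: "X \<in> I" shows "\<exists>B. basis I B \<and> X \<subseteq> B"
proof -
  obtain J' where J': "X \<subseteq> J'" "J' \<subseteq> E" "J' \<in> I" "card J' = rk E" using extend[OF X indep_sub[OF X]] by blast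
  have "basis I J'" by (rule indep_rk_basis[OF J'(3,4)])
  then show ?thesis using J'(1) by blast
qed

lemma basis_ex: "\<exists>B. basis I B"
  using extend_basis[OF indep_empty] by blast

lemma dual_iff: "X \<in> dual_indep E I \<longleftrightarrow> X \<subseteq> E \<and> rk (E - X) = rk E"
proof
  assume "X \<in> dual_indep E I"
  then obtain B where XE: "X \<subseteq> E" and B: "basis I B" "X \<inter> B = {}" unfolding dual_indep_def by blast
  have BI: "B \<in> I" using B(1) unfolding basis_def by blast
  have "B \<subseteq> E - X" using indep_sub[OF BI] B(2) by blast
  then have "card B \<le> rk (E - X)" using rk_ge[OF _ BI] by blast
  moreover have "rk (E - X) \<le> rk E" by (rule rk_mono) blast
  ultimately show "X \<subseteq> E \<and> rk (E - X) = rk E" using basis_card[OF B(1)] XE by simp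
next
  assume a: "X \<subseteq> E \<and> rk (E - X) = rk E"
  obtain Y where Y: "Y \<subseteq> E - X" "Y \<in> I" "card Y = rk (E - X)" using rk_obtain by blast
  have "basis I Y" using indep_rk_basis[OF Y(2)] Y(3) a by simp
  moreover have "X \<inter> Y = {}" using Y(1) by blast
  ultimately show "X \<in> dual_indep E I" unfolding dual_indep_def using a by blast
qed

lemma circuit_cl:
  assumes C: "circuit E I C" and x: "x \<in> C"
  shows "x \<in> cl (C - {x})"
proof -
  have CE: "C \<subseteq> E" and CI: "C \<notin> I" and pr: "\<forall>D. D \<subset> C \<longrightarrow> D \<in> I"
    using C unfolding circuit_def by blast+
  have finC: "finite C" using CE finE finite_subset by blast
  have "C - {x} \<subset> C" using x by blast
  then have ind: "C - {x} \<in> I" using pr by blast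
  have r1: "rk (C - {x}) = card C - 1" using rk_indep[OF ind] finC x by simp
  have r2: "rk C \<le> card C" by (rule rk_le_card[OF finC])
  have r3: "rk C \<noteq> card C"
  proof
    assume eq: "rk C = card C"
    obtain Y where Y: "Y \<subseteq> C" "Y \<in> I" "card Y = rk C" using rk_obtain by blast
    have "Y = C" using card_subset_eq[OF finC Y(1)] Y(3) eq by simp
    then show False using Y(2) CI by simp
  qed
  have r4: "rk (C - {x}) \<le> rk C" by (rule rk_mono) blast
  have ins: "insert x (C - {x}) = C" using x by blast
  have "rk (insert x (C - {x})) = rk (C - {x})" using r1 r2 r3 r4 ins by simp
  then show ?thesis unfolding cl_def using x CE by blast
qed

lemma cocircuit_parts:
  assumes "cocircuit E I D"
  shows "D \<subseteq> E" "D \<notin> dual_indep E I" "\<And>D'. D' \<subset> D \<Longrightarrow> D' \<in> dual_indep E I"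
  using assms unfolding cocircuit_def circuit_def by blast+

lemma cocircuit_cl:
  assumes D: "cocircuit E I D" and d: "d \<in> D"
  shows "d \<notin> cl (E - D)"
proof
  assume dc: "d \<in> cl (E - D)"
  have DE: "D \<subseteq> E" and nD: "D \<notin> dual_indep E I" using cocircuit_parts[OF D] by blast+
  have "D - {d} \<subset> D" using d by blast
  then have "D - {d} \<in> dual_indep E I" using cocircuit_parts(3)[OF D] by blast
  then obtain B where B: "basis I B" "(D - {d}) \<inter> B = {}" unfolding dual_indep_def by blast
  have BI: "B \<in> I" using B(1) unfolding basis_def by blast
  have BE: "B \<subseteq> E" by (rule indep_sub[OF BI])
  have "d \<in> B"
  proof (rule ccontr)
    assume "d \<notin> B"
    then have "D \<inter> B = {}" using B(2) by blast
    then have "D \<in> dual_indep E I" unfolding dual_indep_def using DE B(1) by blast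
    then show False using nD by simp
  qed
  have "B \<subseteq> insert d (E - D)" using BE B(2) by blast
  then have "card B \<le> rk (insert d (E - D))" using rk_ge[OF _ BI] by blast
  moreover have "rk (insert d (E - D)) = rk (E - D)" using dc unfolding cl_def by simp
  ultimately have ge: "rk E \<le> rk (E - D)" using basis_card[OF B(1)] by simp
  obtain Y where Y: "Y \<subseteq> E - D" "Y \<in> I" "card Y = rk (E - D)" using rk_obtain by blast
  have "card Y \<le> rk E" using rk_ge[OF _ Y(2)] Y(1) by blast
  then have "card Y = rk E" using ge Y(3) by simp
  then have "basis I Y" by (rule indep_rk_basis[OF Y(2)])
  moreover have "D \<inter> Y = {}" using Y(1) by blast
  ultimately have "D \<in> dual_indep E I" unfolding dual_indep_def using DE by blast
  then show False using nD by simp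
qed

lemma cocircuit_ne: "cocircuit E I D \<Longrightarrow> D \<noteq> {}"
proof
  assume D: "cocircuit E I D" and e: "D = {}"
  obtain B where "basis I B" using basis_ex by blast
  then have "D \<in> dual_indep E I" unfolding dual_indep_def using e by blast
  then show False using cocircuit_parts(2)[OF D] by simp
qed

lemma orth:
  assumes C: "circuit E I C" and D: "cocircuit E I D" and e: "e \<in> C" "e \<in> D"
  shows "\<exists>z\<in>C \<inter> D. z \<noteq> e"
proof (rule ccontr)
  assume "\<not> (\<exists>z\<in>C \<inter> D. z \<noteq> e)"
  then have "C \<inter> D \<subseteq> {e}" by blast
  moreover have "C \<subseteq> E" using C unfolding circuit_def by blast
  ultimately have sub: "C - {e} \<subseteq> E - D" by blast
  have "e \<in> cl (C - {e})" by (rule circuit_cl[OF C e(1)])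
  then have "e \<in> cl (E - D)" by (rule cl_mono[OF sub])
  then show False using cocircuit_cl[OF D e(2)] by simp
qed

lemma cocircuit_exists:
  assumes AE: "A \<subseteq> E" and eE: "e \<in> E" and ne: "e \<notin> cl A"
  shows "\<exists>D. cocircuit E I D \<and> e \<in> D \<and> D \<inter> A = {}"
proof -
  obtain J where J: "J \<subseteq> A" "J \<in> I" "card J = rk A" using rk_obtain by blast
  have eA: "e \<notin> A" using sub_cl[of e A] eE ne by blast
  have eJ: "e \<notin> J" using eA J(1) by blast
  have "e \<notin> cl J" using cl_mono[OF J(1)] ne by blast
  then have eJI: "insert e J \<in> I" by (rule cl_insert_indep[OF J(2) eE])
  obtain B where B: "basis I B" "insert e J \<subseteq> B" using extend_basis[OF eJI] by blast
  have BI: "B \<in> I" using B(1) unfolding basis_def by blast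
  have BE: "B \<subseteq> E" by (rule indep_sub[OF BI])
  have finB: "finite B" by (rule indep_fin[OF BI])
  have eB: "e \<in> B" using B(2) by blast
  have BeI: "B - {e} \<in> I" using indep_subset[OF BI] by blast
  have cB: "card B = rk E" by (rule basis_card[OF B(1)])
  have cBe: "card (B - {e}) = card B - 1" using eB finB by simp
  have Bpos: "card B > 0" using eB finB card_gt_0_iff by blast
  let ?H = "cl (B - {e})"
  let ?D = "E - ?H"
  have HE: "?H \<subseteq> E" unfolding cl_def by blast
  have finH: "finite ?H" using HE finE finite_subset by blast
  have eD: "e \<in> ?D"
  proof -
    have "e \<notin> ?H"
    proof
      assume "e \<in> ?H"
      then have "rk (insert e (B - {e})) = rk (B - {e})" unfolding cl_def by simp
      moreover have "insert e (B - {e}) = B" using eB by blast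
      ultimately have "rk B = rk (B - {e})" by simp
      then show False using rk_indep[OF BI] rk_indep[OF BeI] cBe Bpos by simp
    qed
    then show ?thesis using eE by blast
  qed
  have DA: "?D \<inter> A = {}"
  proof -
    have "A \<subseteq> ?H"
    proof
      fix a assume a: "a \<in> A"
      have aE: "a \<in> E" using a AE by blast
      have "rk (insert a J) \<le> rk A" by (rule rk_mono) (use a J(1) in blast)
      moreover have "rk J \<le> rk (insert a J)" by (rule rk_mono) blast
      ultimately have "rk (insert a J) = rk J" using J(3) rk_indep[OF J(2)] by simp
      then have "a \<in> cl J" unfolding cl_def using aE by blast
      moreover have "J \<subseteq> B - {e}" using B(2) eJ by blast
      ultimately show "a \<in> ?H" using cl_mono by blast
    qed
    then show ?thesis by blast
  qed
  have rkH: "rk ?H < rk E"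
  proof -
    have "rk ((B - {e}) \<union> ?H) = rk (B - {e})" by (rule rk_cl_union[OF finH]) blast
    moreover have "rk ?H \<le> rk ((B - {e}) \<union> ?H)" by (rule rk_mono) blast
    ultimately show ?thesis using rk_indep[OF BeI] cBe cB Bpos by simp
  qed
  have "cocircuit E I ?D"
    unfolding cocircuit_def circuit_def
  proof (intro conjI allI impI)
    show "?D \<subseteq> E" by blast
    show "?D \<notin> dual_indep E I"
    proof
      assume "?D \<in> dual_indep E I"
      then obtain B' where B': "basis I B'" "?D \<inter> B' = {}" unfolding dual_indep_def by blast
      have B'I: "B' \<in> I" using B'(1) unfolding basis_def by blast
      have "B' \<subseteq> ?H" using indep_sub[OF B'I] B'(2) by blast
      then have "card B' \<le> rk ?H" using rk_ge[OF _ B'I] by blast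
      then show False using basis_card[OF B'(1)] rkH by simp
    qed
    fix D' assume D': "D' \<subset> ?D"
    then obtain d where d: "d \<in> ?D" "d \<notin> D'" by blast
    have dE: "d \<in> E" and dH: "d \<notin> ?H" using d(1) by blast+
    have ins: "insert d (B - {e}) \<in> I" by (rule cl_insert_indep[OF BeI dE dH])
    have dB: "d \<notin> B - {e}" using sub_cl[of d "B - {e}"] dE dH by blast
    have "card (insert d (B - {e})) = Suc (card (B - {e}))" using dB finB by simp
    then have "card (insert d (B - {e})) = rk E" using cBe cB Bpos by simp
    then have bas: "basis I (insert d (B - {e}))" by (rule indep_rk_basis[OF ins])
    have "B - {e} \<subseteq> ?H"
    proof
      fix b assume b: "b \<in> B - {e}"
      then have "b \<in> E" using BE by blast
      then show "b \<in> ?H" using sub_cl[OF b] by simp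
    qed
    then have "D' \<inter> insert d (B - {e}) = {}" using D' d(2) by blast
    moreover have "D' \<subseteq> E" using D' by blast
    ultimately show "D' \<in> dual_indep E I" unfolding dual_indep_def using bas by blast
  qed
  then show ?thesis using eD DA by blast
qed

lemma cocircuit_elim:
  assumes D1: "cocircuit E I D1" and D2: "cocircuit E I D2"
    and s: "s \<in> D1" "s \<in> D2" and e: "e \<in> D1" "e \<notin> D2"
  shows "\<exists>D. cocircuit E I D \<and> e \<in> D \<and> D \<subseteq> (D1 \<union> D2) - {s}"
proof -
  let ?F = "E - (D1 \<union> D2)"
  have D1E: "D1 \<subseteq> E" using cocircuit_parts(1)[OF D1] .
  have eE: "e \<in> E" using e(1) D1E by blast
  have sE: "s \<in> E" using s(1) D1E by blast
  have AE: "insert s ?F \<subseteq> E" using sE by blast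
  have n1: "e \<notin> cl ?F"
  proof
    assume "e \<in> cl ?F"
    then have "e \<in> cl (E - D1)" by (rule cl_mono[rotated]) blast
    then show False using cocircuit_cl[OF D1 e(1)] by simp
  qed
  have n2: "e \<notin> cl (insert s ?F)"
  proof
    assume "e \<in> cl (insert s ?F)"
    then have "s \<in> cl (insert e ?F)" using exchange[OF sE eE] n1 by blast
    moreover have "insert e ?F \<subseteq> E - D2" using e(2) eE by blast
    ultimately have "s \<in> cl (E - D2)" using cl_mono by blast
    then show False using cocircuit_cl[OF D2 s(2)] by simp
  qed
  obtain D where D: "cocircuit E I D" "e \<in> D" "D \<inter> insert s ?F = {}"
    using cocircuit_exists[OF AE eE n2] by blast
  have "D \<subseteq> E" using cocircuit_parts(1)[OF D(1)] .
  then have "D \<subseteq> (D1 \<union> D2) - {s}" using D(3) by blast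
  then show ?thesis using D(1,2) by blast
qed

lemma covering:
  assumes cov: "\<forall>x\<in>E. \<exists>D. cocircuit E I D \<and> x \<in> D \<and> card D \<le> l"
  shows "\<forall>F. rk F = n \<longrightarrow> F \<subseteq> E \<longrightarrow> card F \<le> rk F * l"
proof (induction n rule: less_induct)
  case (less n)
  show ?case
  proof (intro allI impI)
    fix F assume rF: "rk F = n" and FE: "F \<subseteq> E"
    show "card F \<le> rk F * l"
    proof (cases "F = {}")
      case True then show ?thesis by simp
    next
      case False
      then obtain x where x: "x \<in> F" by blast
      have xE: "x \<in> E" using x FE by blast
      obtain D where D: "cocircuit E I D" "x \<in> D" "card D \<le> l" using cov xE by blast
      let ?F' = "F - D"
      have "x \<notin> cl ?F'"
      proof
        assume "x \<in> cl ?F'"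
        then have "x \<in> cl (E - D)" by (rule cl_mono[rotated]) (use FE in blast)
        then show False using cocircuit_cl[OF D(1,2)] by simp
      qed
      then have a: "rk (insert x ?F') \<noteq> rk ?F'" unfolding cl_def using xE by blast
      have b: "rk ?F' \<le> rk (insert x ?F')" by (rule rk_mono) blast
      have c: "rk (insert x ?F') \<le> rk F" by (rule rk_mono) (use x in blast)
      have lt: "rk ?F' < n" using a b c rF by simp
      have F'E: "?F' \<subseteq> E" using FE by blast
      have ih: "card ?F' \<le> rk ?F' * l" using less.IH[OF lt] F'E by blast
      have finF: "finite F" using FE finE finite_subset by blast
      have finD: "finite D" using cocircuit_parts(1)[OF D(1)] finE finite_subset by blast
      have "F \<subseteq> ?F' \<union> D" by blast
      then have "card F \<le> card (?F' \<union> D)" using finF finD by (intro card_mono) simp_all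
      also have "\<dots> \<le> card ?F' + card D" by (rule card_Un_le)
      also have "\<dots> \<le> rk ?F' * l + l" using ih D(3) by simp
      also have "\<dots> = Suc (rk ?F') * l" by simp
      also have "\<dots> \<le> rk F * l" using lt rF by (intro mult_le_mono1) simp
      finally show ?thesis .
    qed
  qed
qed

end



context matr begin

lemma dual_matroid: "matroid E (dual_indep E I)"
  unfolding matroid_def
proof (intro conjI allI impI)
  show "finite E" by (rule finE)
  show "dual_indep E I \<subseteq> Pow E" unfolding dual_indep_def by blast
  show "{} \<in> dual_indep E I" using dual_iff by simp
  fix X Y
  show "Y \<in> dual_indep E I \<and> X \<subseteq> Y \<Longrightarrow> X \<in> dual_indep E I"
    unfolding dual_indep_def by blast
next
  fix X Y
  assume a: "X \<in> dual_indep E I \<and> Y \<in> dual_indep E I \<and> card X < card Y"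
  have XE: "X \<subseteq> E" and rX: "rk (E - X) = rk E" using a dual_iff by blast+
  have YE: "Y \<subseteq> E" and rY: "rk (E - Y) = rk E" using a dual_iff by blast+
  have lt: "card X < card Y" using a by blast
  have finX: "finite X" using XE finE finite_subset by blast
  have finY: "finite Y" using YE finE finite_subset by blast
  show "\<exists>y\<in>Y - X. insert y X \<in> dual_indep E I"
  proof (rule ccontr)
    assume na: "\<not> (\<exists>y\<in>Y - X. insert y X \<in> dual_indep E I)"
    let ?W = "E - (X \<union> Y)"
    obtain J where J: "J \<subseteq> ?W" "J \<in> I" "card J = rk ?W" using rk_obtain by blast
    have JX: "J \<subseteq> E - X" using J(1) by blast
    obtain J' where J': "J \<subseteq> J'" "J' \<subseteq> E - X" "J' \<in> I" "card J' = rk (E - X)"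
      using extend[OF J(2) JX] by blast
    have finJ': "finite J'" by (rule indep_fin[OF J'(3)])
    have YJ': "Y - X \<subseteq> J'"
    proof
      fix y assume y: "y \<in> Y - X"
      show "y \<in> J'"
      proof (rule ccontr)
        assume "y \<notin> J'"
        then have sub: "J' \<subseteq> E - insert y X" using J'(2) by blast
        have "card J' \<le> rk (E - insert y X)" by (rule rk_ge[OF sub J'(3)])
        moreover have "rk (E - insert y X) \<le> rk E" by (rule rk_mono) blast
        ultimately have "rk (E - insert y X) = rk E" using J'(4) rX by simp
        moreover have "insert y X \<subseteq> E" using y YE XE by blast
        ultimately have "insert y X \<in> dual_indep E I" using dual_iff by blast
        then show False using na y by blast
      qed
    qed
    have JW: "J' \<inter> ?W = J"
    proof -
      have s1: "J \<subseteq> J' \<inter> ?W" using J(1) J'(1) by blast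
      have "J' \<inter> ?W \<in> I" using indep_subset[OF J'(3)] by blast
      then have "card (J' \<inter> ?W) \<le> rk ?W" using rk_ge[of "J' \<inter> ?W" ?W] by blast
      moreover have fin2: "finite (J' \<inter> ?W)" using finJ' by simp
      moreover have "card J \<le> card (J' \<inter> ?W)" by (rule card_mono[OF fin2 s1])
      ultimately have "card J = card (J' \<inter> ?W)" using J(3) by simp
      then show ?thesis using card_subset_eq[OF fin2 s1] by simp
    qed
    have J'eq: "J' = J \<union> (Y - X)"
    proof
      show "J' \<subseteq> J \<union> (Y - X)" using J'(2) JW by blast
      show "J \<union> (Y - X) \<subseteq> J'" using J'(1) YJ' by blast
    qed
    have finJ: "finite J" using indep_fin[OF J(2)] .
    have dj: "J \<inter> (Y - X) = {}" using J(1) by blast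
    have cJ': "card J' = card J + card (Y - X)"
      using J'eq card_Un_disjoint[OF finJ _ dj] finY by simp
    have "E - Y = ?W \<union> (X - Y)" using XE by blast
    then have "rk (E - Y) = rk (?W \<union> (X - Y))" by simp
    also have "\<dots> \<le> rk ?W + card (X - Y)" by (rule rk_union_le) (use finX in simp)
    finally have "card (Y - X) \<le> card (X - Y)" using rY cJ' J'(4) rX J(3) by simp
    moreover have "card ((X - Y) \<union> (X \<inter> Y)) = card (X - Y) + card (X \<inter> Y)"
      by (rule card_Un_disjoint) (use finX in auto)
    moreover have "(X - Y) \<union> (X \<inter> Y) = X" by blast
    moreover have "card ((Y - X) \<union> (X \<inter> Y)) = card (Y - X) + card (X \<inter> Y)"
      by (rule card_Un_disjoint) (use finY in auto)
    moreover have "(Y - X) \<union> (X \<inter> Y) = Y" by blast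
    ultimately have "card Y \<le> card X" by simp
    then show False using lt by simp
  qed
qed

lemma basis_I: "basis I B \<Longrightarrow> B \<in> I" unfolding basis_def by blast

lemma double_dual: "dual_indep E (dual_indep E I) = I"
proof
  show "dual_indep E (dual_indep E I) \<subseteq> I"
  proof
    fix X assume "X \<in> dual_indep E (dual_indep E I)"
    then obtain B' where XE: "X \<subseteq> E" and B': "basis (dual_indep E I) B'" "X \<inter> B' = {}"
      unfolding dual_indep_def by blast
    have B'D: "B' \<in> dual_indep E I" and mx: "\<forall>Z\<in>dual_indep E I. B' \<subseteq> Z \<longrightarrow> Z = B'"
      using B'(1) unfolding basis_def by blast+
    obtain B where B: "basis I B" "B' \<inter> B = {}" and B'E: "B' \<subseteq> E" using B'D unfolding dual_indep_def by blast
    have "E - B \<in> dual_indep E I" unfolding dual_indep_def using B(1) by blast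
    moreover have "B' \<subseteq> E - B" using B(2) B'E by blast
    ultimately have "E - B = B'" using mx by blast
    then have "X \<subseteq> B" using XE B'(2) by blast
    then show "X \<in> I" using indep_subset[OF basis_I[OF B(1)]] by blast
  qed
next
  show "I \<subseteq> dual_indep E (dual_indep E I)"
  proof
    fix X assume X: "X \<in> I"
    obtain B where B: "basis I B" "X \<subseteq> B" using extend_basis[OF X] by blast
    have BE: "B \<subseteq> E" using indep_sub[OF basis_I[OF B(1)]] .
    have in1: "E - B \<in> dual_indep E I" unfolding dual_indep_def using B(1) by blast
    have "basis (dual_indep E I) (E - B)"
      unfolding basis_def
    proof (intro conjI ballI impI)
      show "E - B \<in> dual_indep E I" by (rule in1)
      fix Z assume Z: "Z \<in> dual_indep E I" and sub: "E - B \<subseteq> Z"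
      obtain B'' where B'': "basis I B''" "Z \<inter> B'' = {}" and ZE: "Z \<subseteq> E"
        using Z unfolding dual_indep_def by blast
      have B''E: "B'' \<subseteq> E" using indep_sub[OF basis_I[OF B''(1)]] .
      have "B'' \<subseteq> B" using sub B''(2) B''E by blast
      then have "B = B''" using B''(1) basis_I[OF B(1)] unfolding basis_def by blast
      then show "Z = E - B" using sub ZE B''(2) by blast
    qed
    moreover have "X \<inter> (E - B) = {}" using B(2) by blast
    moreover have "X \<subseteq> E" using indep_sub[OF X] .
    ultimately show "X \<in> dual_indep E (dual_indep E I)" unfolding dual_indep_def by blast
  qed
qed

lemma tl_dual:
  assumes tl: "tl_property t1 l1 t2 l2 E I"
  shows "tl_property t2 l2 t1 l1 E (dual_indep E I)"
proof -
  have eq1: "\<And>C. circuit E (dual_indep E I) C = cocircuit E I C" unfolding cocircuit_def ..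
  have eq2: "\<And>C. cocircuit E (dual_indep E I) C = circuit E I C" unfolding cocircuit_def double_dual ..
  have a: "\<forall>X. X \<subseteq> E \<and> card X = t1 \<longrightarrow> (\<exists>C. circuit E I C \<and> card C = l1 \<and> X \<subseteq> C)"
    using tl unfolding tl_property_def by (rule conjunct1)
  have b: "\<forall>X. X \<subseteq> E \<and> card X = t2 \<longrightarrow> (\<exists>C. cocircuit E I C \<and> card C = l2 \<and> X \<subseteq> C)"
    using tl unfolding tl_property_def by (rule conjunct2)
  show ?thesis unfolding tl_property_def eq1 eq2 using b a by (rule conjI)
qed

lemma disj_cl:
  assumes circ: "\<forall>X. X \<subseteq> E \<and> card X = t \<longrightarrow> (\<exists>C. circuit E I C \<and> card C = l \<and> X \<subseteq> C)"
    and lt: "l < 2*t" and tpos: "0 < t"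
    and finD: "finite DD" and cD: "card DD = t - 1" and co: "\<forall>D\<in>DD. cocircuit E I D"
    and dis: "pairwise disjnt DD" and f: "f \<in> E"
  shows "f \<in> cl (\<Union>DD)"
proof (cases "f \<in> \<Union>DD")
  case True then show ?thesis by (rule sub_cl[OF _ f])
next
  case False
  have disj: "\<And>D D' x. D \<in> DD \<Longrightarrow> D' \<in> DD \<Longrightarrow> x \<in> D \<Longrightarrow> x \<in> D' \<Longrightarrow> D = D'"
    using dis unfolding pairwise_def disjnt_def by blast
  define ch where "ch D = (SOME e. e \<in> D)" for D :: "'a set"
  have chD: "ch D \<in> D" if D: "D \<in> DD" for D
  proof -
    have "\<exists>e. e \<in> D" using cocircuit_ne[OF co[rule_format, OF D]] by blast
    then show ?thesis unfolding ch_def by (rule someI_ex)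
  qed
  have injch: "inj_on ch DD"
  proof (rule inj_onI)
    fix D D' assume D: "D \<in> DD" and D': "D' \<in> DD" and eq: "ch D = ch D'"
    have "ch D \<in> D'" using eq chD[OF D'] by simp
    then show "D = D'" by (rule disj[OF D D' chD[OF D]])
  qed
  have UE: "\<Union>DD \<subseteq> E" using co cocircuit_parts(1) by blast
  have chU: "ch ` DD \<subseteq> \<Union>DD" using chD by blast
  let ?X = "insert f (ch ` DD)"
  have fX: "f \<notin> ch ` DD" using chU False by blast
  have finch: "finite (ch ` DD)" using finD by simp
  have cch: "card (ch ` DD) = t - 1" using card_image[OF injch] cD by simp
  have cX: "card ?X = t" using fX finch cch tpos by simp
  have XE: "?X \<subseteq> E" using f chU UE by blast
  obtain C where C: "circuit E I C" "card C = l" "?X \<subseteq> C" using circ XE cX by blast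
  have CE: "C \<subseteq> E" using C(1) unfolding circuit_def by blast
  have finC: "finite C" using CE finE finite_subset by blast
  define g where "g D = (SOME z. z \<in> C \<and> z \<in> D \<and> z \<noteq> ch D)" for D
  have gD: "g D \<in> C \<and> g D \<in> D \<and> g D \<noteq> ch D" if D: "D \<in> DD" for D
  proof -
    have "ch D \<in> C" using C(3) D by blast
    then have "\<exists>z\<in>C \<inter> D. z \<noteq> ch D" using orth[OF C(1) co[rule_format, OF D] _ chD[OF D]] by blast
    then have "\<exists>z. z \<in> C \<and> z \<in> D \<and> z \<noteq> ch D" by blast
    then show ?thesis unfolding g_def by (rule someI_ex)
  qed
  have gX: "g D \<notin> ?X" if D: "D \<in> DD" for D
  proof
    assume "g D \<in> ?X"
    then consider "g D = f" | D' where "D' \<in> DD" "g D = ch D'" by blast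
    then show False
    proof cases
      case 1
      have "g D \<in> D" using gD[OF D] by blast
      then have "f \<in> \<Union>DD" using 1 D by blast
      then show False using \<open>f \<notin> \<Union>DD\<close> by simp
    next
      case 2
      have "g D \<in> D'" using 2 chD by simp
      then have "D = D'" using disj[OF D 2(1)] gD[OF D] by blast
      then show False using 2 gD[OF D] by simp
    qed
  qed
  have injg: "inj_on g DD"
  proof (rule inj_onI)
    fix D D' assume D: "D \<in> DD" and D': "D' \<in> DD" and eq: "g D = g D'"
    have g1: "g D' \<in> D'" using gD[OF D'] by blast
    have g2: "g D \<in> D'" using g1 eq by simp
    have g3: "g D \<in> D" using gD[OF D] by blast
    show "D = D'" by (rule disj[OF D D' g3 g2])
  qed
  have gsub: "g ` DD \<subseteq> C - ?X"
  proof
    fix x assume "x \<in> g ` DD"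
    then obtain D where D: "D \<in> DD" and x: "x = g D" by (rule imageE)
    have "g D \<in> C" using gD[OF D] by blast
    moreover have "g D \<notin> ?X" by (rule gX[OF D])
    ultimately show "x \<in> C - ?X" using x by simp
  qed
  have finX: "finite ?X" using finch by simp
  have cCX: "card (C - ?X) = l - t" using card_Diff_subset[OF finX C(3)] C(2) cX by simp
  have cg: "card (g ` DD) = t - 1" using card_image[OF injg] cD by simp
  have finCX: "finite (C - ?X)" using finC by simp
  have le1: "card (C - ?X) \<le> card (g ` DD)" using cCX cg lt by simp
  have le2: "card (g ` DD) \<le> card (C - ?X)" by (rule card_mono[OF finCX gsub])
  have "card (g ` DD) = card (C - ?X)" using le1 le2 by (rule antisym[rotated])
  then have geq: "g ` DD = C - ?X" by (rule card_subset_eq[OF finCX gsub])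
  have sub: "C - {f} \<subseteq> \<Union>DD"
  proof
    fix x assume x: "x \<in> C - {f}"
    show "x \<in> \<Union>DD"
    proof (cases "x \<in> ch ` DD")
      case True then show ?thesis using chU by blast
    next
      case False
      then have "x \<in> C - ?X" using x by simp
      then have "x \<in> g ` DD" using geq by simp
      then obtain D where D: "D \<in> DD" and xD: "x = g D" by (rule imageE)
      have "g D \<in> D" using gD[OF D] by blast
      then show ?thesis using D xD by blast
    qed
  qed
  have "f \<in> C" using C(3) by blast
  then have "f \<in> cl (C - {f})" by (rule circuit_cl[OF C(1)])
  then show ?thesis by (rule cl_mono[OF sub])
qed

lemma rk_le_cl:
  assumes "E \<subseteq> cl K" "finite K"
  shows "rk E \<le> card K"
proof -
  have "rk E \<le> rk (K \<union> E)" by (rule rk_mono) blast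
  also have "\<dots> = rk K" by (rule rk_cl_union[OF finE assms(1)])
  also have "\<dots> \<le> card K" by (rule rk_le_card[OF assms(2)])
  finally show ?thesis .
qed

end



lemma arith_sf:
  fixes p Q k u :: nat
  assumes "1 \<le> p" "1 \<le> Q" "Suc k * p * Q < u + 1" "u \<le> (p - 1) * Suc k * Q"
  shows False
proof -
  obtain p' where p: "p = Suc p'" using assms(1) by (cases p) auto
  have e: "Suc k * p * Q = p' * Suc k * Q + Suc k * Q" unfolding p by (simp add: algebra_simps)
  have "Suc k * Q \<ge> 1" using assms(2) by simp
  then show False using assms(3,4) e p by simp
qed

lemma sunflower:
  "\<forall>F. finite F \<and> (\<forall>D\<in>F. finite D \<and> card D \<le> k) \<and> fact k * p ^ k < card F \<longrightarrow>
     (\<exists>S DD. DD \<subseteq> F \<and> card DD = p \<and> (\<forall>D\<in>DD. S \<subseteq> D) \<and> (\<forall>D\<in>DD. \<forall>D'\<in>DD. D \<noteq> D' \<longrightarrow> D \<inter> D' \<subseteq> S))"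
proof (induction k)
  case 0
  show ?case
  proof (intro allI impI)
    fix F :: "'a set set"
    assume a: "finite F \<and> (\<forall>D\<in>F. finite D \<and> card D \<le> 0) \<and> fact 0 * p ^ 0 < card F"
    have "F \<subseteq> {{}}"
    proof
      fix D assume "D \<in> F"
      then have "finite D" "card D \<le> 0" using a by blast+
      then show "D \<in> {{}}" by simp
    qed
    then have "card F \<le> card {{}::'a set}" by (intro card_mono) simp_all
    then have "card F \<le> 1" by simp
    then show "\<exists>S DD. DD \<subseteq> F \<and> card DD = p \<and> (\<forall>D\<in>DD. S \<subseteq> D) \<and> (\<forall>D\<in>DD. \<forall>D'\<in>DD. D \<noteq> D' \<longrightarrow> D \<inter> D' \<subseteq> S)"
      using a by simp
  qed
next
  case (Suc k)
  show ?case
  proof (intro allI impI)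
    fix F :: "'a set set"
    assume a: "finite F \<and> (\<forall>D\<in>F. finite D \<and> card D \<le> Suc k) \<and> fact (Suc k) * p ^ Suc k < card F"
    have finF: "finite F" using a by blast
    have memF: "\<And>D. D \<in> F \<Longrightarrow> finite D \<and> card D \<le> Suc k" using a by blast
    have big: "fact (Suc k) * p ^ Suc k < card F" using a by blast
    show "\<exists>S DD. DD \<subseteq> F \<and> card DD = p \<and> (\<forall>D\<in>DD. S \<subseteq> D) \<and> (\<forall>D\<in>DD. \<forall>D'\<in>DD. D \<noteq> D' \<longrightarrow> D \<inter> D' \<subseteq> S)"
    proof (cases "\<exists>DD. DD \<subseteq> F \<and> card DD = p \<and> pairwise disjnt DD")
      case True
      then obtain DD where DD: "DD \<subseteq> F" "card DD = p" "pairwise disjnt DD" by blast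
      have "\<forall>D\<in>DD. \<forall>D'\<in>DD. D \<noteq> D' \<longrightarrow> D \<inter> D' \<subseteq> {}"
        using DD(3) unfolding pairwise_def disjnt_def by blast
      then show ?thesis using DD(1,2) by blast
    next
      case False
      note nodis = False
      have p1: "1 \<le> p"
      proof (rule ccontr)
        assume "\<not> 1 \<le> p"
        then have "p = 0" by simp
        then have "{} \<subseteq> F \<and> card {} = p \<and> pairwise disjnt {}" by simp
        then show False using nodis by blast
      qed
      let ?P = "{G. G \<subseteq> F \<and> pairwise disjnt G}"
      have finP: "finite ?P" using finF by simp
      have eP: "{} \<in> ?P" by simp
      obtain G where GP: "G \<in> ?P" and mx: "\<forall>Z\<in>?P. card Z \<le> card G"
        using ex_max_card[OF finP eP] by blast
      have GF: "G \<subseteq> F" and Gd: "pairwise disjnt G" using GP by blast+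
      have finG: "finite G" using GF finF finite_subset by blast
      have cG: "card G < p"
      proof (rule ccontr)
        assume "\<not> card G < p"
        then have "p \<le> card G" by simp
        then obtain T where T: "T \<subseteq> G" "card T = p" by (rule obtain_subset_with_card_n)
        have "pairwise disjnt T" by (rule pairwise_subset[OF Gd T(1)])
        then show False using nodis T GF by blast
      qed
      let ?U = "\<Union>G"
      have finU: "finite ?U" using finG GF memF by blast
      have cU: "card ?U \<le> card G * Suc k"
      proof -
        have "card ?U \<le> sum card G" by (rule card_Union_le_sum_card)
        also have "\<dots> \<le> card G * Suc k" using sum_bounded_above[of G card "Suc k"] GF memF by auto
        finally show ?thesis .
      qed
      have meet: "D \<inter> ?U \<noteq> {}" if D: "D \<in> F" "D \<noteq> {}" for D
      proof
        assume dj: "D \<inter> ?U = {}"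
        show False
        proof (cases "D \<in> G")
          case True
          then have "D \<subseteq> ?U" by blast
          then show False using dj D(2) by blast
        next
          case False
          have "\<forall>Y\<in>G. Y \<noteq> D \<longrightarrow> disjnt D Y \<and> disjnt Y D" using dj unfolding disjnt_def by blast
          then have "pairwise disjnt (insert D G)" unfolding pairwise_insert using Gd by blast
          moreover have "insert D G \<subseteq> F" using D(1) GF by blast
          ultimately have "insert D G \<in> ?P" by blast
          then have "card (insert D G) \<le> card G" using mx by blast
          moreover have "card (insert D G) = Suc (card G)" using False finG by simp
          ultimately show False by simp
        qed
      qed
      define Fu where "Fu u = {D\<in>F. u \<in> D}" for u
      have sub1: "F - {{}} \<subseteq> (\<Union>u\<in>?U. Fu u)"
      proof
        fix D assume D: "D \<in> F - {{}}"
        then have "D \<inter> ?U \<noteq> {}" using meet by blast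
        then obtain u where "u \<in> D" "u \<in> ?U" by blast
        then show "D \<in> (\<Union>u\<in>?U. Fu u)" using D unfolding Fu_def by blast
      qed
      have finFu: "finite (\<Union>u\<in>?U. Fu u)" using finF unfolding Fu_def by (rule finite_subset[rotated]) blast
      have c1: "card (F - {{}}) \<le> (\<Sum>u\<in>?U. card (Fu u))"
      proof -
        have "card (F - {{}}) \<le> card (\<Union>u\<in>?U. Fu u)" by (rule card_mono[OF finFu sub1])
        also have "\<dots> \<le> (\<Sum>u\<in>?U. card (Fu u))" by (rule card_UN_le[OF finU])
        finally show ?thesis .
      qed
      have c2: "card F \<le> card (F - {{}}) + 1"
        using finF by (cases "{} \<in> F") (simp_all add: card_Diff_singleton_if)
      let ?Q = "fact k * p ^ k"
      have Q1: "1 \<le> ?Q" using p1 by simp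
      have "\<exists>u\<in>?U. ?Q < card (Fu u)"
      proof (rule ccontr)
        assume "\<not> (\<exists>u\<in>?U. ?Q < card (Fu u))"
        then have "\<forall>u\<in>?U. card (Fu u) \<le> ?Q" by (simp add: not_less)
        then have bnd: "\<And>u. u \<in> ?U \<Longrightarrow> card (Fu u) \<le> ?Q" by blast
        have "(\<Sum>u\<in>?U. card (Fu u)) \<le> of_nat (card ?U) * ?Q" by (rule sum_bounded_above) (rule bnd)
        then have "(\<Sum>u\<in>?U. card (Fu u)) \<le> card ?U * ?Q" by simp
        also have "\<dots> \<le> card G * Suc k * ?Q" using cU by (rule mult_le_mono1)
        also have "\<dots> \<le> (p - 1) * Suc k * ?Q" using cG by (intro mult_le_mono1) simp
        finally have s: "(\<Sum>u\<in>?U. card (Fu u)) \<le> (p - 1) * Suc k * ?Q" .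
        have eqf: "fact (Suc k) * p ^ Suc k = Suc k * p * ?Q" by (simp add: algebra_simps)
        have "Suc k * p * ?Q < card (F - {{}}) + 1" using big c2 eqf by linarith
        then show False using arith_sf[OF p1 Q1 _ order_trans[OF c1 s]] by simp
      qed
      then obtain u where uU: "u \<in> ?U" and uQ: "?Q < card (Fu u)" by blast
      let ?F' = "(\<lambda>D. D - {u}) ` Fu u"
      have injm: "inj_on (\<lambda>D. D - {u}) (Fu u)"
      proof (rule inj_onI)
        fix A B assume A: "A \<in> Fu u" and B: "B \<in> Fu u" and eq: "A - {u} = B - {u}"
        have "u \<in> A" "u \<in> B" using A B unfolding Fu_def by blast+
        then have "A = insert u (A - {u})" "B = insert u (B - {u})" by blast+
        then show "A = B" using eq by simp
      qed
      have finFu1: "finite (Fu u)" using finF unfolding Fu_def by simp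
      have cF': "card ?F' = card (Fu u)" by (rule card_image[OF injm])
      have memF': "\<forall>D\<in>?F'. finite D \<and> card D \<le> k"
      proof
        fix D' assume "D' \<in> ?F'"
        then obtain D where D: "D \<in> Fu u" and D': "D' = D - {u}" by (rule imageE)
        have DF: "D \<in> F" and uD: "u \<in> D" using D unfolding Fu_def by blast+
        have "finite D" "card D \<le> Suc k" using memF[OF DF] by blast+
        then show "finite D' \<and> card D' \<le> k" using D' uD by simp
      qed
      have "finite ?F' \<and> (\<forall>D\<in>?F'. finite D \<and> card D \<le> k) \<and> fact k * p ^ k < card ?F'"
      proof -
        have h1: "finite ?F'" by (rule finite_imageI[OF finFu1])
        have h3: "fact k * p ^ k < card ?F'" using cF' uQ by linarith
        show ?thesis by (rule conjI[OF h1 conjI[OF memF' h3]])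
      qed
      then have "\<exists>S DD. DD \<subseteq> ?F' \<and> card DD = p \<and> (\<forall>D\<in>DD. S \<subseteq> D) \<and> (\<forall>D\<in>DD. \<forall>D'\<in>DD. D \<noteq> D' \<longrightarrow> D \<inter> D' \<subseteq> S)"
        by (rule Suc.IH[rule_format])
      then obtain S' DD' where DDa: "DD' \<subseteq> ?F' \<and> card DD' = p \<and> (\<forall>D\<in>DD'. S' \<subseteq> D) \<and>
        (\<forall>D\<in>DD'. \<forall>D'\<in>DD'. D \<noteq> D' \<longrightarrow> D \<inter> D' \<subseteq> S')"
        by (elim exE)
      have DDf1: "DD' \<subseteq> ?F'" using DDa by (rule conjunct1)
      have DDf2: "card DD' = p" using DDa by (elim conjE)
      have DDf3: "\<forall>D\<in>DD'. S' \<subseteq> D" using DDa by (elim conjE)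
      have DDf4: "\<forall>D\<in>DD'. \<forall>D'\<in>DD'. D \<noteq> D' \<longrightarrow> D \<inter> D' \<subseteq> S'" using DDa by (elim conjE)
      note DDf = DDf1 DDf2 DDf3 DDf4
      have nu: "\<And>D. D \<in> DD' \<Longrightarrow> u \<notin> D" using DDf(1) by blast
      have backF: "\<And>D. D \<in> DD' \<Longrightarrow> insert u D \<in> F"
      proof -
        fix D' assume "D' \<in> DD'"
        then have "D' \<in> ?F'" using DDf(1) by blast
        then obtain D where D: "D \<in> Fu u" and D': "D' = D - {u}" by (rule imageE)
        have DF: "D \<in> F" and uD: "u \<in> D" using D unfolding Fu_def by blast+
        have "insert u D' = D" using D' uD by blast
        then show "insert u D' \<in> F" using DF by simp
      qed
      have inji: "inj_on (insert u) DD'"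
      proof (rule inj_onI)
        fix A B assume A: "A \<in> DD'" and B: "B \<in> DD'" and eq: "insert u A = insert u B"
        have "A = insert u A - {u}" using nu[OF A] by blast
        also have "\<dots> = insert u B - {u}" using eq by simp
        also have "\<dots> = B" using nu[OF B] by blast
        finally show "A = B" .
      qed
      let ?DD = "insert u ` DD'"
      have r1: "?DD \<subseteq> F" using backF by blast
      have r2: "card ?DD = p" using card_image[OF inji] DDf(2) by simp
      have r3: "\<forall>D\<in>?DD. insert u S' \<subseteq> D" using DDf(3) by blast
      have r4: "\<forall>D\<in>?DD. \<forall>D'\<in>?DD. D \<noteq> D' \<longrightarrow> D \<inter> D' \<subseteq> insert u S'"
      proof (intro ballI impI)
        fix X Y assume X: "X \<in> ?DD" and Y: "Y \<in> ?DD" and ne: "X \<noteq> Y"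
        obtain A where A: "A \<in> DD'" "X = insert u A" using X by blast
        obtain B where B: "B \<in> DD'" "Y = insert u B" using Y by blast
        have "A \<noteq> B" using A B ne by blast
        then have "A \<inter> B \<subseteq> S'" using DDf(4) A(1) B(1) by blast
        then show "X \<inter> Y \<subseteq> insert u S'" using A(2) B(2) by blast
      qed
      show ?thesis using r1 r2 r3 r4 by blast
    qed
  qed
qed




context matr begin

lemma DC:
  "\<forall>DD S b. finite S \<and> card S \<le> s \<and> finite DD \<and> (\<forall>D\<in>DD. cocircuit E I D \<and> card D \<le> b \<and> \<not> D \<subseteq> S)
     \<and> (\<forall>D\<in>DD. \<forall>D'\<in>DD. D \<noteq> D' \<longrightarrow> D \<inter> D' \<subseteq> S) \<and> p * 4 ^ s \<le> card DD
   \<longrightarrow> (\<exists>DD'. finite DD' \<and> card DD' = p \<and> pairwise disjnt DD' \<and> (\<forall>D\<in>DD'. cocircuit E I D \<and> card D \<le> 2 ^ s * b))"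
proof (induction s)
  case 0
  show ?case
  proof (intro allI impI)
    fix DD S b
    assume a: "finite S \<and> card S \<le> 0 \<and> finite DD \<and> (\<forall>D\<in>DD. cocircuit E I D \<and> card D \<le> b \<and> \<not> D \<subseteq> S)
     \<and> (\<forall>D\<in>DD. \<forall>D'\<in>DD. D \<noteq> D' \<longrightarrow> D \<inter> D' \<subseteq> S) \<and> p * 4 ^ 0 \<le> card DD"
    have fS: "finite S" and c0: "card S = 0" using a by simp_all
    have S: "S = {}" using c0 fS by simp
    have "p \<le> card DD" using a by simp
    then obtain T where T: "T \<subseteq> DD" "card T = p" "finite T" by (rule obtain_subset_with_card_n)
    have "pairwise disjnt T"
      unfolding pairwise_def disjnt_def using a S T(1) by blast
    moreover have "\<forall>D\<in>T. cocircuit E I D \<and> card D \<le> 2 ^ 0 * b" using a T(1) by auto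
    ultimately show "\<exists>DD'. finite DD' \<and> card DD' = p \<and> pairwise disjnt DD' \<and> (\<forall>D\<in>DD'. cocircuit E I D \<and> card D \<le> 2 ^ 0 * b)"
      using T by blast
  qed
next
  case (Suc s)
  show ?case
  proof (intro allI impI)
    fix DD S b
    assume a: "finite S \<and> card S \<le> Suc s \<and> finite DD \<and> (\<forall>D\<in>DD. cocircuit E I D \<and> card D \<le> b \<and> \<not> D \<subseteq> S)
     \<and> (\<forall>D\<in>DD. \<forall>D'\<in>DD. D \<noteq> D' \<longrightarrow> D \<inter> D' \<subseteq> S) \<and> p * 4 ^ Suc s \<le> card DD"
    have finS: "finite S" and cS: "card S \<le> Suc s" and finDD: "finite DD" using a by blast+
    have mem: "\<And>D. D \<in> DD \<Longrightarrow> cocircuit E I D \<and> card D \<le> b \<and> \<not> D \<subseteq> S" using a by blast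
    have int: "\<And>D D'. D \<in> DD \<Longrightarrow> D' \<in> DD \<Longrightarrow> D \<noteq> D' \<Longrightarrow> D \<inter> D' \<subseteq> S" using a by blast
    have cDD: "p * 4 ^ Suc s \<le> card DD" using a by blast
    show "\<exists>DD'. finite DD' \<and> card DD' = p \<and> pairwise disjnt DD' \<and> (\<forall>D\<in>DD'. cocircuit E I D \<and> card D \<le> 2 ^ Suc s * b)"
    proof (cases "S = {}")
      case True
      have "p \<le> card DD" using cDD by (rule order_trans[rotated]) simp
      then obtain T where T: "T \<subseteq> DD" "card T = p" "finite T" by (rule obtain_subset_with_card_n)
      have "pairwise disjnt T"
        unfolding pairwise_def disjnt_def using int True T(1) by blast
      moreover have "\<forall>D\<in>T. cocircuit E I D \<and> card D \<le> 2 ^ Suc s * b"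
      proof
        fix D assume "D \<in> T"
        then have "cocircuit E I D" "card D \<le> b" using mem T(1) by blast+
        moreover have "b \<le> 2 ^ Suc s * b"
        proof -
          have "1 \<le> (2::nat) ^ Suc s" by simp
          then show ?thesis using mult_le_mono1[of 1 "2 ^ Suc s" b] by simp
        qed
        ultimately show "cocircuit E I D \<and> card D \<le> 2 ^ Suc s * b" using le_trans by blast
      qed
      ultimately show ?thesis using T by blast
    next
      case False
      then obtain s0 where s0: "s0 \<in> S" by blast
      let ?S0 = "S - {s0}"
      have finS0: "finite ?S0" using finS by simp
      have cS0: "card ?S0 \<le> s" using cS s0 finS by simp
      let ?Out = "{D\<in>DD. s0 \<notin> D}"
      let ?In = "{D\<in>DD. s0 \<in> D}"
      show ?thesis
      proof (cases "p * 4 ^ s \<le> card ?Out")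
        case True
        have finOut: "finite ?Out" using finDD by simp
        have m1: "\<forall>D\<in>?Out. cocircuit E I D \<and> card D \<le> b \<and> \<not> D \<subseteq> ?S0" using mem by blast
        have m2: "\<forall>D\<in>?Out. \<forall>D'\<in>?Out. D \<noteq> D' \<longrightarrow> D \<inter> D' \<subseteq> ?S0" using int by blast
        have "\<exists>DD'. finite DD' \<and> card DD' = p \<and> pairwise disjnt DD' \<and> (\<forall>D\<in>DD'. cocircuit E I D \<and> card D \<le> 2 ^ s * b)"
          using Suc.IH[rule_format, of ?S0 ?Out b] finS0 cS0 finOut m1 m2 True by blast
        then obtain DD' where DD': "finite DD'" "card DD' = p" "pairwise disjnt DD'"
          "\<forall>D\<in>DD'. cocircuit E I D \<and> card D \<le> 2 ^ s * b" by blast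
        have "\<forall>D\<in>DD'. cocircuit E I D \<and> card D \<le> 2 ^ Suc s * b"
        proof
          fix D assume "D \<in> DD'"
          then have "cocircuit E I D" "card D \<le> 2 ^ s * b" using DD'(4) by blast+
          moreover have "2 ^ s * b \<le> 2 ^ Suc s * b" by (rule mult_le_mono1) simp
          ultimately show "cocircuit E I D \<and> card D \<le> 2 ^ Suc s * b" using le_trans by blast
        qed
        then show ?thesis using DD'(1,2,3) by blast
      next
        case False
        let ?m = "p * 4 ^ s"
        have un: "DD = ?In \<union> ?Out" by blast
        have "card DD = card ?In + card ?Out"
          using finDD by (subst un) (rule card_Un_disjoint, simp_all, blast)
        then have cIn: "2 * ?m \<le> card ?In" using cDD False by simp
        have finIn: "finite ?In" using finDD by simp
        obtain h where h: "bij_betw h {0..<card ?In} ?In" using ex_bij_betw_nat_finite[OF finIn] by blast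
        have hIn: "\<And>k. k < card ?In \<Longrightarrow> h k \<in> ?In" using h unfolding bij_betw_def by auto
        have hinj: "\<And>k k'. k < card ?In \<Longrightarrow> k' < card ?In \<Longrightarrow> h k = h k' \<Longrightarrow> k = k'"
          using h unfolding bij_betw_def inj_on_def by simp
        have hint: "\<And>k k'. k < card ?In \<Longrightarrow> k' < card ?In \<Longrightarrow> k \<noteq> k' \<Longrightarrow> h k \<inter> h k' \<subseteq> S"
        proof -
          fix k k' assume k: "k < card ?In" and k': "k' < card ?In" and ne: "k \<noteq> k'"
          have "h k \<noteq> h k'" using hinj[OF k k'] ne by blast
          moreover have "h k \<in> DD" "h k' \<in> DD" using hIn[OF k] hIn[OF k'] by blast+
          ultimately show "h k \<inter> h k' \<subseteq> S" using int by blast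
        qed
        have idx: "\<And>j. j < ?m \<Longrightarrow> 2 * j < card ?In \<and> Suc (2 * j) < card ?In" using cIn by simp
        define e where "e j = (SOME x. x \<in> h (2 * j) \<and> x \<notin> S)" for j
        have eP: "e j \<in> h (2 * j) \<and> e j \<notin> S" if j: "j < ?m" for j
        proof -
          have "h (2 * j) \<in> DD" using hIn idx[OF j] by blast
          then have "\<not> h (2 * j) \<subseteq> S" using mem by blast
          then have "\<exists>x. x \<in> h (2 * j) \<and> x \<notin> S" by blast
          then show ?thesis unfolding e_def by (rule someI_ex)
        qed
        define D' where "D' j = (SOME D. cocircuit E I D \<and> e j \<in> D \<and> D \<subseteq> (h (2 * j) \<union> h (Suc (2 * j))) - {s0})" for j
        have D'P: "cocircuit E I (D' j) \<and> e j \<in> D' j \<and> D' j \<subseteq> (h (2 * j) \<union> h (Suc (2 * j))) - {s0}"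
          if j: "j < ?m" for j
        proof -
          have i1: "h (2 * j) \<in> ?In" and i2: "h (Suc (2 * j)) \<in> ?In" using hIn idx[OF j] by blast+
          have c1: "cocircuit E I (h (2 * j))" and c2: "cocircuit E I (h (Suc (2 * j)))" using i1 i2 mem by blast+
          have s1: "s0 \<in> h (2 * j)" and s2: "s0 \<in> h (Suc (2 * j))" using i1 i2 by blast+
          have ee: "e j \<in> h (2 * j)" "e j \<notin> S" using eP[OF j] by blast+
          have "h (2 * j) \<inter> h (Suc (2 * j)) \<subseteq> S" using hint idx[OF j] by simp
          then have ee2: "e j \<notin> h (Suc (2 * j))" using ee by blast
          have "\<exists>D. cocircuit E I D \<and> e j \<in> D \<and> D \<subseteq> (h (2 * j) \<union> h (Suc (2 * j))) - {s0}"
            by (rule cocircuit_elim[OF c1 c2 s1 s2 ee(1) ee2])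
          then show ?thesis unfolding D'_def by (rule someI_ex)
        qed
        have D'int: "D' j \<inter> D' k \<subseteq> ?S0" if j: "j < ?m" and k: "k < ?m" and ne: "j \<noteq> k" for j k
        proof
          fix x assume x: "x \<in> D' j \<inter> D' k"
          have xj: "x \<in> h (2 * j) \<union> h (Suc (2 * j))" "x \<noteq> s0" using x D'P[OF j] by blast+
          have xk: "x \<in> h (2 * k) \<union> h (Suc (2 * k))" using x D'P[OF k] by blast
          have ij: "2 * j < card ?In" "Suc (2 * j) < card ?In" using idx[OF j] by blast+
          have ik: "2 * k < card ?In" "Suc (2 * k) < card ?In" using idx[OF k] by blast+
          have d1: "2 * j \<noteq> 2 * k" "2 * j \<noteq> Suc (2 * k)" "Suc (2 * j) \<noteq> 2 * k" "Suc (2 * j) \<noteq> Suc (2 * k)"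
            using ne by presburger+
          have "x \<in> S"
          proof (cases "x \<in> h (2 * j)")
            case True
            show ?thesis
            proof (cases "x \<in> h (2 * k)")
              case True
              then show ?thesis using hint[OF ij(1) ik(1) d1(1)] \<open>x \<in> h (2 * j)\<close> by blast
            next
              case False
              then have "x \<in> h (Suc (2 * k))" using xk by blast
              then show ?thesis using hint[OF ij(1) ik(2) d1(2)] \<open>x \<in> h (2 * j)\<close> by blast
            qed
          next
            case False
            then have xj2: "x \<in> h (Suc (2 * j))" using xj by blast
            show ?thesis
            proof (cases "x \<in> h (2 * k)")
              case True
              then show ?thesis using hint[OF ij(2) ik(1) d1(3)] xj2 by blast
            next
              case False
              then have "x \<in> h (Suc (2 * k))" using xk by blast
              then show ?thesis using hint[OF ij(2) ik(2) d1(4)] xj2 by blast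
            qed
          qed
          then show "x \<in> ?S0" using xj(2) by blast
        qed
        have injD': "inj_on D' {..<?m}"
        proof (rule inj_onI)
          fix j k assume j: "j \<in> {..<?m}" and k: "k \<in> {..<?m}" and eq: "D' j = D' k"
          show "j = k"
          proof (rule ccontr)
            assume ne: "j \<noteq> k"
            have jm: "j < ?m" and km: "k < ?m" using j k by simp_all
            have "e j \<in> D' j" using D'P[OF jm] by blast
            then have "e j \<in> D' j \<inter> D' k" using eq by simp
            then have "e j \<in> S" using D'int[OF jm km ne] by blast
            then show False using eP[OF jm] by blast
          qed
        qed
        let ?DD2 = "D' ` {..<?m}"
        have fin2: "finite ?DD2" by simp
        have c2: "card ?DD2 = ?m" using card_image[OF injD'] by simp
        have m1: "\<forall>D\<in>?DD2. cocircuit E I D \<and> card D \<le> 2 * b \<and> \<not> D \<subseteq> ?S0"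
        proof
          fix D assume "D \<in> ?DD2"
          then obtain j where j: "j < ?m" and D: "D = D' j" by auto
          have cc: "cocircuit E I D" using D'P[OF j] D by blast
          have i1: "h (2 * j) \<in> DD" and i2: "h (Suc (2 * j)) \<in> DD" using hIn idx[OF j] by blast+
          have f1: "finite (h (2 * j))" "finite (h (Suc (2 * j)))"
            using cocircuit_parts(1) mem[OF i1] mem[OF i2] finE finite_subset by blast+
          have "card D \<le> card (h (2 * j) \<union> h (Suc (2 * j)))"
            using D'P[OF j] D f1 by (intro card_mono) auto
          also have "\<dots> \<le> card (h (2 * j)) + card (h (Suc (2 * j)))" by (rule card_Un_le)
          also have "\<dots> \<le> 2 * b" using mem[OF i1] mem[OF i2] by simp
          finally have cb: "card D \<le> 2 * b" .
          have "\<not> D \<subseteq> ?S0" using eP[OF j] D'P[OF j] D by blast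
          then show "cocircuit E I D \<and> card D \<le> 2 * b \<and> \<not> D \<subseteq> ?S0" using cc cb by blast
        qed
        have m2: "\<forall>D\<in>?DD2. \<forall>D''\<in>?DD2. D \<noteq> D'' \<longrightarrow> D \<inter> D'' \<subseteq> ?S0"
        proof (intro ballI impI)
          fix X Y assume X: "X \<in> ?DD2" and Y: "Y \<in> ?DD2" and ne: "X \<noteq> Y"
          obtain j where j: "j < ?m" and XD: "X = D' j" using X by auto
          obtain k where k: "k < ?m" and YD: "Y = D' k" using Y by auto
          have "j \<noteq> k" using ne XD YD by blast
          then show "X \<inter> Y \<subseteq> ?S0" using D'int[OF j k] XD YD by simp
        qed
        have "\<exists>DD'. finite DD' \<and> card DD' = p \<and> pairwise disjnt DD' \<and> (\<forall>D\<in>DD'. cocircuit E I D \<and> card D \<le> 2 ^ s * (2 * b))"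
          using Suc.IH[rule_format, of ?S0 ?DD2 "2 * b"] finS0 cS0 fin2 m1 m2 c2 by simp
        then show ?thesis by (simp add: mult.assoc mult.left_commute)
      qed
    qed
  qed
qed

end



context matr begin

lemma main_bound:
  assumes t1: "0 < t1" and t2: "0 < t2" and lt: "l1 < 2 * t1" and tl: "tl_property t1 l1 t2 l2 E I"
  shows "card E \<le> t2 + l2 * (fact l2 * ((t1 - 1) * 4 ^ l2 + 1) ^ l2) + (t1 - 1) * (2 ^ l2 * l2) * l2"
proof (cases "card E < t2")
  case True then show ?thesis by simp
next
  case False
  have circ: "\<forall>X. X \<subseteq> E \<and> card X = t1 \<longrightarrow> (\<exists>C. circuit E I C \<and> card C = l1 \<and> X \<subseteq> C)"
    using tl unfolding tl_property_def by (rule conjunct1)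
  have coc: "\<forall>X. X \<subseteq> E \<and> card X = t2 \<longrightarrow> (\<exists>C. cocircuit E I C \<and> card C = l2 \<and> X \<subseteq> C)"
    using tl unfolding tl_property_def by (rule conjunct2)
  have cov: "\<forall>x\<in>E. \<exists>D. cocircuit E I D \<and> x \<in> D \<and> card D \<le> l2"
  proof
    fix x assume x: "x \<in> E"
    have "card (E - {x}) = card E - 1" using x finE by simp
    then have "t2 - 1 \<le> card (E - {x})" using False by simp
    then obtain T where T: "T \<subseteq> E - {x}" "card T = t2 - 1" "finite T" by (rule obtain_subset_with_card_n)
    have X: "insert x T \<subseteq> E" using T(1) x by blast
    have xT: "x \<notin> T" using T(1) by blast
    have cX: "card (insert x T) = t2" using T(2,3) xT t2 by simp
    obtain C where C: "cocircuit E I C" "card C = l2" "insert x T \<subseteq> C" using coc X cX by blast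
    then show "\<exists>D. cocircuit E I D \<and> x \<in> D \<and> card D \<le> l2" by blast
  qed
  let ?P = "(t1 - 1) * 4 ^ l2 + 1"
  let ?F = "{D. cocircuit E I D \<and> card D \<le> l2}"
  have FP: "?F \<subseteq> Pow E" using cocircuit_parts(1) by blast
  have finF: "finite ?F" using finite_subset[OF FP] finE by simp
  have memF: "\<forall>D\<in>?F. finite D \<and> card D \<le> l2"
  proof
    fix D assume D: "D \<in> ?F"
    then have "D \<subseteq> E" using FP by blast
    then have "finite D" using finE finite_subset by blast
    then show "finite D \<and> card D \<le> l2" using D by simp
  qed
  have EU: "E \<subseteq> \<Union>?F" using cov by blast
  have finU: "finite (\<Union>?F)" using finF memF by blast
  have cE1: "card E \<le> card ?F * l2"
  proof -
    have "card E \<le> card (\<Union>?F)" by (rule card_mono[OF finU EU])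
    also have "\<dots> \<le> sum card ?F" by (rule card_Union_le_sum_card)
    also have "\<dots> \<le> of_nat (card ?F) * l2" by (rule sum_bounded_above) (use memF in blast)
    finally show ?thesis by simp
  qed
  show ?thesis
  proof (cases "card ?F \<le> fact l2 * ?P ^ l2")
    case True
    have a1: "card ?F * l2 \<le> (fact l2 * ?P ^ l2) * l2" using True by (rule mult_le_mono1)
    have a2: "(fact l2 * ?P ^ l2) * l2 = l2 * (fact l2 * ?P ^ l2)" by (rule mult.commute)
    show ?thesis using cE1 a1 a2 by linarith
  next
    case False
    have Flt: "fact l2 * ?P ^ l2 < card ?F" using False by simp
    have "\<exists>S DD. DD \<subseteq> ?F \<and> card DD = ?P \<and> (\<forall>D\<in>DD. S \<subseteq> D) \<and> (\<forall>D\<in>DD. \<forall>D'\<in>DD. D \<noteq> D' \<longrightarrow> D \<inter> D' \<subseteq> S)"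
      by (rule sunflower[rule_format, OF conjI[OF finF conjI[OF memF Flt]]])
    then obtain S DD0 where DDa: "DD0 \<subseteq> ?F \<and> card DD0 = ?P \<and> (\<forall>D\<in>DD0. S \<subseteq> D) \<and> (\<forall>D\<in>DD0. \<forall>D'\<in>DD0. D \<noteq> D' \<longrightarrow> D \<inter> D' \<subseteq> S)"
      by (elim exE)
    have D01: "DD0 \<subseteq> ?F" using DDa by (elim conjE)
    have D02: "card DD0 = ?P" using DDa by (elim conjE)
    have D03: "\<forall>D\<in>DD0. S \<subseteq> D" using DDa by (elim conjE)
    have D04: "\<forall>D\<in>DD0. \<forall>D'\<in>DD0. D \<noteq> D' \<longrightarrow> D \<inter> D' \<subseteq> S" using DDa by (elim conjE)
    have fin0: "finite DD0" using finite_subset[OF D01 finF] .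
    let ?DD1 = "DD0 - {S}"
    have fin1: "finite ?DD1" using fin0 by simp
    have c1: "(t1 - 1) * 4 ^ l2 \<le> card ?DD1"
      using D02 fin0 by (cases "S \<in> DD0") (simp_all add: card_Diff_singleton_if)
    have "DD0 \<noteq> {}" using D02 by auto
    then obtain D0 where D0: "D0 \<in> DD0" by blast
    have SD0: "S \<subseteq> D0" using D03 D0 by blast
    have D0F: "finite D0 \<and> card D0 \<le> l2" using memF D01 D0 by blast
    have finS: "finite S" using SD0 D0F finite_subset by blast
    have cS: "card S \<le> l2" using card_mono[OF _ SD0] D0F by (meson le_trans)
    have m1: "\<forall>D\<in>?DD1. cocircuit E I D \<and> card D \<le> l2 \<and> \<not> D \<subseteq> S"
    proof
      fix D assume D: "D \<in> ?DD1"
      have "D \<in> ?F" using D D01 by blast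
      then have "cocircuit E I D" "card D \<le> l2" by simp_all
      moreover have "S \<subseteq> D" using D D03 by blast
      moreover have "D \<noteq> S" using D by blast
      ultimately show "cocircuit E I D \<and> card D \<le> l2 \<and> \<not> D \<subseteq> S" by blast
    qed
    have m2: "\<forall>D\<in>?DD1. \<forall>D'\<in>?DD1. D \<noteq> D' \<longrightarrow> D \<inter> D' \<subseteq> S" using D04 by blast
    have "\<exists>DD'. finite DD' \<and> card DD' = t1 - 1 \<and> pairwise disjnt DD' \<and> (\<forall>D\<in>DD'. cocircuit E I D \<and> card D \<le> 2 ^ l2 * l2)"
      by (rule DC[of l2 "t1 - 1", rule_format, OF conjI[OF finS conjI[OF cS conjI[OF fin1 conjI[OF m1 conjI[OF m2 c1]]]]]])
    then obtain DD' where DDb: "finite DD' \<and> card DD' = t1 - 1 \<and> pairwise disjnt DD' \<and> (\<forall>D\<in>DD'. cocircuit E I D \<and> card D \<le> 2 ^ l2 * l2)"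
      by (elim exE)
    have f1: "finite DD'" using DDb by (elim conjE)
    have f2: "card DD' = t1 - 1" using DDb by (elim conjE)
    have f3: "pairwise disjnt DD'" using DDb by (elim conjE)
    have f4: "\<forall>D\<in>DD'. cocircuit E I D \<and> card D \<le> 2 ^ l2 * l2" using DDb by (elim conjE)
    have f5: "\<forall>D\<in>DD'. cocircuit E I D" using f4 by blast
    have Ecl: "E \<subseteq> cl (\<Union>DD')"
    proof
      fix f assume f: "f \<in> E"
      show "f \<in> cl (\<Union>DD')" by (rule disj_cl[OF circ lt t1 f1 f2 f5 f3 f])
    qed
    have memD: "\<forall>D\<in>DD'. finite D" using f5 cocircuit_parts(1) finE finite_subset by blast
    have finU': "finite (\<Union>DD')" using f1 memD by blast
    have r1: "rk E \<le> card (\<Union>DD')" by (rule rk_le_cl[OF Ecl finU'])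
    have r2: "card (\<Union>DD') \<le> (t1 - 1) * (2 ^ l2 * l2)"
    proof -
      have "card (\<Union>DD') \<le> sum card DD'" by (rule card_Union_le_sum_card)
      also have "\<dots> \<le> of_nat (card DD') * (2 ^ l2 * l2)" by (rule sum_bounded_above) (use f4 in blast)
      finally show ?thesis using f2 by simp
    qed
    have "\<forall>F. rk F = rk E \<longrightarrow> F \<subseteq> E \<longrightarrow> card F \<le> rk F * l2" by (rule covering[OF cov])
    then have r3: "card E \<le> rk E * l2" by blast
    have r4: "rk E * l2 \<le> (t1 - 1) * (2 ^ l2 * l2) * l2" using r1 r2 by (intro mult_le_mono1) simp
    show ?thesis using r3 r4 by linarith
  qed
qed

end

theorem theorem3p3:
  fixes t1 l1 t2 l2 :: nat
  assumes "0 < t1" "0 < l1" "0 < t2" "0 < l2"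
    and "l1 < 2 * t1 \<or> l2 < 2 * t2"
  shows "\<exists>S :: (nat set \<times> nat set set) set. finite S \<and>
           (\<forall>(E :: 'a set) I. matroid E I \<and> tl_property t1 l1 t2 l2 E I \<longrightarrow>
              (\<exists>(E', I') \<in> S. matroid_iso E I E' I'))"
proof -
  define Bd where "Bd a c d = c + d * (fact d * ((a - 1) * 4 ^ d + 1) ^ d) + (a - 1) * (2 ^ d * d) * d" for a c d :: nat
  define N where "N = Bd t1 t2 l2 + Bd t2 t1 l1"
  have bound: "card E \<le> N" if M: "matroid E I" and tl: "tl_property t1 l1 t2 l2 E I" for E :: "'a set" and I
  proof -
    interpret M1: matr E I by (rule matr.intro[OF M])
    from assms(5) show ?thesis
    proof
      assume lt: "l1 < 2 * t1"
      have "card E \<le> Bd t1 t2 l2" unfolding Bd_def by (rule M1.main_bound[OF assms(1) assms(3) lt tl])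
      then show ?thesis unfolding N_def by simp
    next
      assume lt: "l2 < 2 * t2"
      interpret M2: matr E "dual_indep E I" by (rule matr.intro[OF M1.dual_matroid])
      have "card E \<le> Bd t2 t1 l1" unfolding Bd_def by (rule M2.main_bound[OF assms(3) assms(1) lt M1.tl_dual[OF tl]])
      then show ?thesis unfolding N_def by simp
    qed
  qed
  let ?S = "{q :: nat set \<times> nat set set. fst q \<subseteq> {..<N} \<and> snd q \<subseteq> Pow (fst q)}"
  have Ssub: "?S \<subseteq> Pow {..<N} \<times> Pow (Pow {..<N})"
  proof
    fix q assume q: "q \<in> ?S"
    obtain A B where qAB: "q = (A, B)" by (cases q)
    have A: "A \<subseteq> {..<N}" and B: "B \<subseteq> Pow A" using q qAB by auto
    have "B \<subseteq> Pow {..<N}" using A B by blast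
    then show "q \<in> Pow {..<N} \<times> Pow (Pow {..<N})" using A qAB by simp
  qed
  have finS: "finite ?S" by (rule finite_subset[OF Ssub]) simp
  show ?thesis
  proof (rule exI[of _ ?S], intro conjI allI impI)
    show "finite ?S" by (rule finS)
    fix E :: "'a set" and I
    assume a: "matroid E I \<and> tl_property t1 l1 t2 l2 E I"
    have M: "matroid E I" using a by blast
    have cE: "card E \<le> N" using bound a by blast
    have finE: "finite E" using M unfolding matroid_def by blast
    have IP: "I \<subseteq> Pow E" using M unfolding matroid_def by blast
    obtain h where h: "bij_betw h {0..<card E} E" using ex_bij_betw_nat_finite[OF finE] by blast
    define g where "g = inv_into {0..<card E} h"
    have g: "bij_betw g E {0..<card E}" unfolding g_def by (rule bij_betw_inv_into[OF h])
    have ginj: "inj_on g E" using g unfolding bij_betw_def by blast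
    have gE: "g ` E = {0..<card E}" using g unfolding bij_betw_def by blast
    define E' where "E' = {0..<card E}"
    define I' where "I' = (\<lambda>X. g ` X) ` I"
    have mem: "(E', I') \<in> ?S"
    proof -
      have "E' \<subseteq> {..<N}" unfolding E'_def using cE by auto
      moreover have "I' \<subseteq> Pow E'"
      proof
        fix Y assume "Y \<in> I'"
        then obtain X where X: "X \<in> I" "Y = g ` X" unfolding I'_def by blast
        have "X \<subseteq> E" using X(1) IP by blast
        then have "g ` X \<subseteq> g ` E" by (rule image_mono)
        then show "Y \<in> Pow E'" using X(2) gE unfolding E'_def by simp
      qed
      ultimately show ?thesis by simp
    qed
    have iso: "matroid_iso E I E' I'"
      unfolding matroid_iso_def
    proof (intro exI[of _ g] conjI allI impI)
      show "bij_betw g E E'" unfolding E'_def by (rule g)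
      fix X assume X: "X \<subseteq> E"
      show "X \<in> I \<longleftrightarrow> g ` X \<in> I'"
      proof
        assume "X \<in> I" then show "g ` X \<in> I'" unfolding I'_def by blast
      next
        assume "g ` X \<in> I'"
        then obtain Y where Y: "Y \<in> I" "g ` X = g ` Y" unfolding I'_def by blast
        have YE: "Y \<subseteq> E" using Y(1) IP by blast
        have "X = Y" using inj_on_image_eq_iff[OF ginj X YE] Y(2) by simp
        then show "X \<in> I" using Y(1) by simp
      qed
    qed
    show "\<exists>(E', I') \<in> ?S. matroid_iso E I E' I'" using mem iso by blast
  qed
qed



end
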